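(* For the FCIQMC step, on the event $M_t\ge m$, $$\mathbb{E}\bigl(\|F(A,v_t)-Av_t\|_2^2\mid\mathcal{F}_t\bigr)\le C_e\frac{\|A\|_1^2\|v_t\|_1^2}{m},\qquad C_e=\frac{\max_k(\|a_k\|_0-2)\|a_{o,k}\|_2^2+\frac12}{\|A\|_1^2}.$$
   Context: Let $A\in\mathbb{R}^{N\times N}$ be real symmetric, with every diagonal entry nonzero and every column having at least 2 nonzero entries. Write $A=A_d+A_o$ with $A_d$ the diagonal part and $A_o$ the off-diagonal part; $a_k=A(:,k)$, $a_{o,k}=A_o(:,k)$; $\|x\|_0$ is the number of nonzero entries; $\|A\|_1=\max_k\sum_i|A_{ik}|$; $e_l$ the $l$-th standard basis vector. FCIQMC step: the current iterate $v_t\in\mathbb{Z}^N$ is represented by $M_t=\|v_t\|_1$ signed particles, $|v_t(k)|$ particles at location $k$ each with sign $\mathrm{sgn}(v_t(k))$. For each particle with location $k$ and sign $s$, independently of all other particles (conditionally on $\mathcal F_t$): (Spawning) choose $l$ uniformly at random among the indices $j$ with $A_o(j,k)\neq0$; let $Q=\|a_{o,k}\|_0|A(l,k)|$ and $n=\lfloor Q\rfloor$ w.p. $1-(Q-\lfloor Q\rfloor)$, $n=\lfloor Q\rfloor+1$ w.p. $Q-\lfloor Q\rfloor$; contribute $n\,\mathrm{sgn}(A(l,k)s)\,e_l$. (Diagonal) independently, $Q=|A(k,k)|$, $n$ by the same rounding rule, contribute $n\,\mathrm{sgn}(A(k,k)s)\,e_k$. (Annihilation) $F(A,v_t)=v_{t+1}$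 is the sum of all contributions. $\mathcal{F}_t=\sigma(v_1,\dots,v_t)$. *)

theory Defs
  imports "HOL-Probability.Probability"
begin

text \<open>Matrices are N x N real matrices given as functions nat => nat => real, indexed by
  {0..<N}; A i k is the entry in row i, column k. Integer vectors are nat => int, only
  the entries with index < N are relevant (all random contributions vanish outside).\<close>

definition rsgn :: "real \<Rightarrow> int" where
  "rsgn x = (if x > 0 then 1 else if x < 0 then -1 else 0)"

definition sround :: "real \<Rightarrow> int pmf" where
  "sround Q = map_pmf (\<lambda>b. if b then \<lfloor>Q\<rfloor> + 1 else \<lfloor>Q\<rfloor>) (bernoulli_pmf (Q - of_int \<lfloor>Q\<rfloor>))"

definition offsupp :: "nat \<Rightarrow> (nat \<Rightarrow> nat \<Rightarrow> real) \<Rightarrow> nat \<Rightarrow> nat set" where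
  "offsupp N A k = {j. j < N \<and> j \<noteq> k \<and> A j k \<noteq> 0}"

definition spawn_pmf :: "nat \<Rightarrow> (nat \<Rightarrow> nat \<Rightarrow> real) \<Rightarrow> nat \<Rightarrow> int \<Rightarrow> (nat \<Rightarrow> int) pmf" where
  "spawn_pmf N A k s =
     pmf_of_set (offsupp N A k) \<bind> (\<lambda>l.
     sround (real (card (offsupp N A k)) * \<bar>A l k\<bar>) \<bind> (\<lambda>n.
     return_pmf (\<lambda>i. if i = l then n * rsgn (A l k * real_of_int s) else 0)))"

definition diag_pmf :: "(nat \<Rightarrow> nat \<Rightarrow> real) \<Rightarrow> nat \<Rightarrow> int \<Rightarrow> (nat \<Rightarrow> int) pmf" where
  "diag_pmf A k s =
     sround \<bar>A k k\<bar> \<bind> (\<lambda>n.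
     return_pmf (\<lambda>i. if i = k then n * rsgn (A k k * real_of_int s) else 0))"

definition particle_pmf :: "nat \<Rightarrow> (nat \<Rightarrow> nat \<Rightarrow> real) \<Rightarrow> nat \<times> int \<Rightarrow> (nat \<Rightarrow> int) pmf" where
  "particle_pmf N A p =
     spawn_pmf N A (fst p) (snd p) \<bind> (\<lambda>x. diag_pmf A (fst p) (snd p) \<bind> (\<lambda>y.
     return_pmf (\<lambda>i. x i + y i)))"

fun sum_particles :: "nat \<Rightarrow> (nat \<Rightarrow> nat \<Rightarrow> real) \<Rightarrow> (nat \<times> int) list \<Rightarrow> (nat \<Rightarrow> int) pmf" where
  "sum_particles N A [] = return_pmf (\<lambda>i. 0)"
| "sum_particles N A (p # ps) =
     particle_pmf N A p \<bind> (\<lambda>x. sum_particles N A ps \<bind> (\<lambda>y. return_pmf (\<lambda>i. x i + y i)))"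

definition particles :: "nat \<Rightarrow> (nat \<Rightarrow> int) \<Rightarrow> (nat \<times> int) list" where
  "particles N v = concat (map (\<lambda>k. replicate (nat \<bar>v k\<bar>) (k, sgn (v k))) [0..<N])"

text \<open>Distribution of F(A,v): the FCIQMC step with annihilation (conditional law given F_t).\<close>
definition fciqmc_step :: "nat \<Rightarrow> (nat \<Rightarrow> nat \<Rightarrow> real) \<Rightarrow> (nat \<Rightarrow> int) \<Rightarrow> (nat \<Rightarrow> int) pmf" where
  "fciqmc_step N A v = sum_particles N A (particles N v)"

definition mat_norm1 :: "nat \<Rightarrow> (nat \<Rightarrow> nat \<Rightarrow> real) \<Rightarrow> real" where
  "mat_norm1 N A = Max ((\<lambda>k. \<Sum>i<N. \<bar>A i k\<bar>) ` {..<N})"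

definition vec_norm1 :: "nat \<Rightarrow> (nat \<Rightarrow> int) \<Rightarrow> real" where
  "vec_norm1 N v = (\<Sum>i<N. real_of_int \<bar>v i\<bar>)"

definition col_norm0 :: "nat \<Rightarrow> (nat \<Rightarrow> nat \<Rightarrow> real) \<Rightarrow> nat \<Rightarrow> nat" where
  "col_norm0 N A k = card {i. i < N \<and> A i k \<noteq> 0}"

definition offcol_norm2_sq :: "nat \<Rightarrow> (nat \<Rightarrow> nat \<Rightarrow> real) \<Rightarrow> nat \<Rightarrow> real" where
  "offcol_norm2_sq N A k = (\<Sum>i\<in>{i. i < N \<and> i \<noteq> k}. (A i k)\<^sup>2)"

definition C_e :: "nat \<Rightarrow> (nat \<Rightarrow> nat \<Rightarrow> real) \<Rightarrow> real" where
  "C_e N A = (Max ((\<lambda>k. (real (col_norm0 N A k) - 2) * offcol_norm2_sq N A k) ` {..<N}) + 1/2)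
              / (mat_norm1 N A)\<^sup>2"

definition mat_vec :: "nat \<Rightarrow> (nat \<Rightarrow> nat \<Rightarrow> real) \<Rightarrow> (nat \<Rightarrow> int) \<Rightarrow> nat \<Rightarrow> real" where
  "mat_vec N A v i = (\<Sum>j<N. A i j * real_of_int (v j))"

end

theory Submission
  imports Defs
begin

abbreviation E :: "'a pmf \<Rightarrow> ('a \<Rightarrow> real) \<Rightarrow> real" where
  "E P f \<equiv> measure_pmf.expectation P f"

lemma fin_bind:
  assumes "finite (set_pmf P)" "\<And>x. x \<in> set_pmf P \<Longrightarrow> finite (set_pmf (K x))"
  shows "finite (set_pmf (P \<bind> K))"
  using assms by (auto simp: set_bind_pmf)

lemma E_bind:
  fixes f :: "'b \<Rightarrow> real"
  assumes fP: "finite (set_pmf P)" and fK: "\<And>x. x \<in> set_pmf P \<Longrightarrow> finite (set_pmf (K x))"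
  shows "E (bind_pmf P K) f = E P (\<lambda>x. E (K x) f)"
proof -
  define B where "B = (\<Union>x\<in>set_pmf P. set_pmf (K x))"
  have fB: "finite B" unfolding B_def by (intro finite_UN_I fP fK)
  have "E (bind_pmf P K) f = (\<Sum>z\<in>B. f z * pmf (bind_pmf P K) z)"
    by (rule integral_measure_pmf_real[OF fB]) (auto simp: B_def set_bind_pmf)
  also have "\<dots> = (\<Sum>z\<in>B. f z * (\<Sum>x\<in>set_pmf P. pmf (K x) z * pmf P x))"
  proof (rule sum.cong[OF refl])
    fix z
    have "pmf (bind_pmf P K) z = (\<Sum>x\<in>set_pmf P. pmf (K x) z * pmf P x)"
      unfolding pmf_bind by (rule integral_measure_pmf_real) (auto simp: fP)
    then show "f z * pmf (bind_pmf P K) z = f z * (\<Sum>x\<in>set_pmf P. pmf (K x) z * pmf P x)" by simp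
  qed
  also have "\<dots> = (\<Sum>x\<in>set_pmf P. (\<Sum>z\<in>B. f z * pmf (K x) z) * pmf P x)"
    by (simp add: sum_distrib_left sum_distrib_right mult_ac sum.swap[of _ B])
  also have "\<dots> = (\<Sum>x\<in>set_pmf P. E (K x) f * pmf P x)"
  proof (rule sum.cong[OF refl])
    fix x assume x: "x \<in> set_pmf P"
    have "E (K x) f = (\<Sum>z\<in>B. f z * pmf (K x) z)"
      by (rule integral_measure_pmf_real[OF fB]) (use x in \<open>auto simp: B_def\<close>)
    then show "(\<Sum>z\<in>B. f z * pmf (K x) z) * pmf P x = E (K x) f * pmf P x" by simp
  qed
  also have "\<dots> = E P (\<lambda>x. E (K x) f)"
    by (rule integral_measure_pmf_real[symmetric]) (auto simp: fP)
  finally show ?thesis .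
qed

lemma fin_sround: "finite (set_pmf (sround Q))"
  by (simp add: sround_def)

lemma E_sround: "E (sround Q) g = g (\<lfloor>Q\<rfloor> + 1) * (Q - of_int \<lfloor>Q\<rfloor>) + g \<lfloor>Q\<rfloor> * (1 - (Q - of_int \<lfloor>Q\<rfloor>))"
proof -
  have "0 \<le> Q - of_int \<lfloor>Q\<rfloor>" "Q - of_int \<lfloor>Q\<rfloor> \<le> 1" by linarith+
  then show ?thesis by (simp add: sround_def)
qed

lemma sround_lin: "E (sround Q) (\<lambda>n. b * real_of_int n + c) = b * Q + c"
  unfolding E_sround by (simp add: algebra_simps)

lemma sround_quad:
  assumes "a \<ge> 0"
  shows "E (sround Q) (\<lambda>n. a * (real_of_int n)\<^sup>2 + b * real_of_int n + c) \<le> a * (Q\<^sup>2 + 1/4) + b * Q + c"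
proof -
  define f where "f = Q - of_int \<lfloor>Q\<rfloor>"
  have Q: "Q = of_int \<lfloor>Q\<rfloor> + f" by (simp add: f_def)
  have "f - f^2 \<le> 1/4" using zero_le_power2[of "f - 1/2"] by (simp add: power2_eq_square algebra_simps)
  then have "a * (f - f^2) \<le> a * (1/4)" using assms by (intro mult_left_mono) auto
  then show ?thesis unfolding E_sround f_def[symmetric]
    by (subst (5 6) Q) (simp add: algebra_simps power2_eq_square)
qed

lemma E_add: "finite (set_pmf P) \<Longrightarrow> E P (\<lambda>x. f x + g x) = E P f + E P g"
  by (rule Bochner_Integration.integral_add) (auto intro: integrable_measure_pmf_finite)

lemma E_diff: "finite (set_pmf P) \<Longrightarrow> E P (\<lambda>x. f x - g x) = E P f - E P g"
  by (rule Bochner_Integration.integral_diff) (auto intro: integrable_measure_pmf_finite)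

lemma E_const[simp]: "E P (\<lambda>x. c) = c"
  by simp

lemma E_cmult: "E P (\<lambda>x. c * f x) = c * E P f"
  by simp

lemma E_sum: "finite (set_pmf P) \<Longrightarrow> E P (\<lambda>x. \<Sum>i\<in>I. f i x) = (\<Sum>i\<in>I. E P (f i))"
  by (rule Bochner_Integration.integral_sum) (auto intro: integrable_measure_pmf_finite)

lemma E_return[simp]: "E (return_pmf x) f = f x"
  by simp

definition addp :: "(nat \<Rightarrow> int) pmf \<Rightarrow> (nat \<Rightarrow> int) pmf \<Rightarrow> (nat \<Rightarrow> int) pmf" where
  "addp P Q = P \<bind> (\<lambda>x. Q \<bind> (\<lambda>y. return_pmf (\<lambda>i. x i + y i)))"

lemma fin_addp: "finite (set_pmf P) \<Longrightarrow> finite (set_pmf Q) \<Longrightarrow> finite (set_pmf (addp P Q))"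
  unfolding addp_def by (intro fin_bind) auto

lemma E_addp:
  assumes "finite (set_pmf P)" "finite (set_pmf Q)"
  shows "E (addp P Q) f = E P (\<lambda>x. E Q (\<lambda>y. f (\<lambda>i. x i + y i)))"
proof -
  have "E (addp P Q) f = E P (\<lambda>x. E (Q \<bind> (\<lambda>y. return_pmf (\<lambda>i. x i + y i))) f)"
    unfolding addp_def by (rule E_bind) (use assms in \<open>auto intro: fin_bind\<close>)
  also have "\<dots> = E P (\<lambda>x. E Q (\<lambda>y. f (\<lambda>i. x i + y i)))"
    by (subst E_bind) (use assms in auto)
  finally show ?thesis .
qed

definition mu :: "(nat \<Rightarrow> int) pmf \<Rightarrow> nat \<Rightarrow> real" where
  "mu P i = E P (\<lambda>w. real_of_int (w i))"

definition V :: "nat \<Rightarrow> (nat \<Rightarrow> int) pmf \<Rightarrow> (nat \<Rightarrow> real) \<Rightarrow> real" where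
  "V N P c = E P (\<lambda>w. \<Sum>i<N. (real_of_int (w i) - c i)\<^sup>2)"

lemma mu_addp:
  assumes "finite (set_pmf P)" "finite (set_pmf Q)"
  shows "mu (addp P Q) i = mu P i + mu Q i"
proof -
  have "mu (addp P Q) i = E P (\<lambda>x. E Q (\<lambda>y. real_of_int (x i) + real_of_int (y i)))"
    unfolding mu_def by (simp add: E_addp assms)
  also have "\<dots> = E P (\<lambda>x. real_of_int (x i) + mu Q i)"
    by (simp add: E_add assms mu_def)
  also have "\<dots> = mu P i + mu Q i"
    by (simp add: E_add assms mu_def)
  finally show ?thesis .
qed

lemma V_addp:
  assumes fP: "finite (set_pmf P)" and fQ: "finite (set_pmf Q)"
  shows "V N (addp P Q) (\<lambda>i. a i + mu Q i) = V N P a + V N Q (mu Q)"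
proof -
  have eq: "(real_of_int ((x i + y i)) - (a i + mu Q i))\<^sup>2 =
     (real_of_int (x i) - a i)\<^sup>2 + ((real_of_int (y i) - mu Q i)\<^sup>2
      + (2 * (real_of_int (x i) - a i)) * (real_of_int (y i) - mu Q i))" for x y :: "nat \<Rightarrow> int" and i
    by (simp add: power2_eq_square algebra_simps)
  have inner: "E Q (\<lambda>y. \<Sum>i<N. (real_of_int ((x i + y i)) - (a i + mu Q i))\<^sup>2)
     = (\<Sum>i<N. (real_of_int (x i) - a i)\<^sup>2) + V N Q (mu Q)" for x :: "nat \<Rightarrow> int"
  proof -
    have "E Q (\<lambda>y. \<Sum>i<N. (real_of_int ((x i + y i)) - (a i + mu Q i))\<^sup>2)
      = E Q (\<lambda>y. (\<Sum>i<N. (real_of_int (x i) - a i)\<^sup>2) + ((\<Sum>i<N. (real_of_int (y i) - mu Q i)\<^sup>2)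
          + (\<Sum>i<N. (2 * (real_of_int (x i) - a i)) * (real_of_int (y i) - mu Q i))))"
      by (rule arg_cong[where f="E Q"], rule ext, simp only: sum.distrib[symmetric], rule sum.cong, rule refl, rule eq)
    also have "\<dots> = (\<Sum>i<N. (real_of_int (x i) - a i)\<^sup>2) + (V N Q (mu Q)
        + (\<Sum>i<N. (2 * (real_of_int (x i) - a i)) * E Q (\<lambda>y. real_of_int (y i) - mu Q i)))"
      by (simp add: E_add E_sum fQ V_def)
    also have "\<dots> = (\<Sum>i<N. (real_of_int (x i) - a i)\<^sup>2) + V N Q (mu Q)"
      by (simp add: E_diff fQ mu_def[symmetric])
    finally show ?thesis .
  qed
  have "V N (addp P Q) (\<lambda>i. a i + mu Q i) = E P (\<lambda>x. (\<Sum>i<N. (real_of_int (x i) - a i)\<^sup>2) + V N Q (mu Q))"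
    unfolding V_def by (simp add: E_addp fP fQ inner[unfolded V_def] del: of_int_add)
  also have "\<dots> = V N P a + V N Q (mu Q)"
    by (simp add: E_add fP V_def)
  finally show ?thesis .
qed

lemma V_cong: "(\<And>i. i < N \<Longrightarrow> c i = c' i) \<Longrightarrow> V N P c = V N P c'"
  unfolding V_def by simp

lemma sround_lin2: "(\<And>n. g n = b * real_of_int n + c) \<Longrightarrow> E (sround Q) g = b * Q + c"
proof -
  assume h: "\<And>n. g n = b * real_of_int n + c"
  have "g = (\<lambda>n. b * real_of_int n + c)" by (rule ext) (rule h)
  then show ?thesis by (simp add: sround_lin)
qed

lemma sround_quad2: "a \<ge> 0 \<Longrightarrow> (\<And>n. g n = a * (real_of_int n)\<^sup>2 + b * real_of_int n + c) \<Longrightarrow>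
   E (sround Q) g \<le> a * (Q\<^sup>2 + 1/4) + b * Q + c"
proof -
  assume a: "a \<ge> 0" and h: "\<And>n. g n = a * (real_of_int n)\<^sup>2 + b * real_of_int n + c"
  have "g = (\<lambda>n. a * (real_of_int n)\<^sup>2 + b * real_of_int n + c)" by (rule ext) (rule h)
  then show ?thesis using sround_quad[OF a] by simp
qed

definition one_pmf :: "real \<Rightarrow> nat \<Rightarrow> int \<Rightarrow> (nat \<Rightarrow> int) pmf" where
  "one_pmf Q l \<sigma> = sround Q \<bind> (\<lambda>n. return_pmf (\<lambda>i. if i = l then n * \<sigma> else 0))"

lemma fin_one: "finite (set_pmf (one_pmf Q l \<sigma>))"
  unfolding one_pmf_def by (intro fin_bind) (auto simp: fin_sround)

lemma E_one: "E (one_pmf Q l \<sigma>) f = E (sround Q) (\<lambda>n. f (\<lambda>i. if i = l then n * \<sigma> else 0))"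
  unfolding one_pmf_def by (subst E_bind) (auto simp: fin_sround)

lemma mu_one: "mu (one_pmf Q l \<sigma>) i = (if i = l then real_of_int \<sigma> * Q else 0)"
proof (cases "i = l")
  case True
  have "E (sround Q) (\<lambda>n. real_of_int (if i = l then n * \<sigma> else 0)) = real_of_int \<sigma> * Q + 0"
    by (rule sround_lin2) (simp add: True)
  then show ?thesis using True by (simp add: mu_def E_one)
next
  case False then show ?thesis by (simp add: mu_def E_one)
qed

lemma sum_single:
  fixes \<mu> :: "nat \<Rightarrow> real"
  assumes "l < N"
  shows "(\<Sum>i<N. (real_of_int (if i = l then z else 0) - \<mu> i)\<^sup>2)
     = (real_of_int z)\<^sup>2 - 2 * real_of_int z * \<mu> l + (\<Sum>i<N. (\<mu> i)\<^sup>2)"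
proof -
  have "(real_of_int (if i = l then z else 0) - \<mu> i)\<^sup>2
     = (\<mu> i)\<^sup>2 + (if i = l then (real_of_int z)\<^sup>2 - 2 * real_of_int z * \<mu> l else 0)" for i
    by (auto simp: power2_eq_square algebra_simps)
  then show ?thesis using assms by (simp add: sum.distrib)
qed

lemma V_one:
  assumes "l < N" "(real_of_int \<sigma>)\<^sup>2 = 1"
  shows "V N (one_pmf Q l \<sigma>) \<mu> \<le> (Q\<^sup>2 + 1/4) - 2 * (real_of_int \<sigma> * \<mu> l) * Q + (\<Sum>i<N. (\<mu> i)\<^sup>2)"
proof -
  have "V N (one_pmf Q l \<sigma>) \<mu> \<le> 1 * (Q\<^sup>2 + 1/4) + (- 2 * (real_of_int \<sigma> * \<mu> l)) * Q + (\<Sum>i<N. (\<mu> i)\<^sup>2)"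
    unfolding V_def E_one
  proof (rule sround_quad2)
    fix n :: int
    show "(\<Sum>i<N. (real_of_int (if i = l then n * \<sigma> else 0) - \<mu> i)\<^sup>2) =
       1 * (real_of_int n)\<^sup>2 + - 2 * (real_of_int \<sigma> * \<mu> l) * real_of_int n + (\<Sum>i<N. (\<mu> i)\<^sup>2)"
      unfolding sum_single[OF assms(1)] using assms(2)
      by (simp add: power_mult_distrib algebra_simps)
  qed simp
  then show ?thesis by simp
qed

lemma rsgn_sq: "a \<noteq> 0 \<Longrightarrow> s \<in> {1, -1} \<Longrightarrow> (real_of_int (rsgn (a * real_of_int s)))\<^sup>2 = 1"
  by (auto simp: rsgn_def)

lemma rsgn_abs: "s \<in> {1, -1} \<Longrightarrow> real_of_int (rsgn (a * real_of_int s)) * \<bar>a\<bar> = real_of_int s * a"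
  by (auto simp: rsgn_def)

lemma rsgn_mu: "s \<in> {1, -1} \<Longrightarrow> real_of_int (rsgn (a * real_of_int s)) * (real_of_int s * a) = \<bar>a\<bar>"
  by (auto simp: rsgn_def)

lemma fin_offsupp: "finite (offsupp N A k)"
  by (rule finite_subset[of _ "{..<N}"]) (auto simp: offsupp_def)

lemma spawn_eq: "spawn_pmf N A k s = pmf_of_set (offsupp N A k) \<bind>
   (\<lambda>l. one_pmf (real (card (offsupp N A k)) * \<bar>A l k\<bar>) l (rsgn (A l k * real_of_int s)))"
  unfolding spawn_pmf_def one_pmf_def ..

lemma diag_eq: "diag_pmf A k s = one_pmf \<bar>A k k\<bar> k (rsgn (A k k * real_of_int s))"
  unfolding diag_pmf_def one_pmf_def ..

lemma particle_eq: "particle_pmf N A p = addp (spawn_pmf N A (fst p) (snd p)) (diag_pmf A (fst p) (snd p))"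
  unfolding particle_pmf_def addp_def ..

lemma fin_spawn: "offsupp N A k \<noteq> {} \<Longrightarrow> finite (set_pmf (spawn_pmf N A k s))"
  unfolding spawn_eq by (intro fin_bind) (auto simp: fin_one fin_offsupp)

lemma fin_diag: "finite (set_pmf (diag_pmf A k s))"
  unfolding diag_eq by (rule fin_one)

lemma E_spawn:
  assumes "offsupp N A k \<noteq> {}"
  shows "E (spawn_pmf N A k s) f = (\<Sum>l\<in>offsupp N A k.
     E (one_pmf (real (card (offsupp N A k)) * \<bar>A l k\<bar>) l (rsgn (A l k * real_of_int s))) f)
       / real (card (offsupp N A k))"
  unfolding spawn_eq using assms
  by (subst E_bind) (auto simp: fin_one fin_offsupp integral_pmf_of_set)

lemma offsupp_ne:
  assumes "k < N" "card {i. i < N \<and> A i k \<noteq> 0} \<ge> 2"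
  shows "offsupp N A k \<noteq> {}"
proof
  assume h: "offsupp N A k = {}"
  have "{i. i < N \<and> A i k \<noteq> 0} \<subseteq> {k}" using h by (auto simp: offsupp_def)
  then have "card {i. i < N \<and> A i k \<noteq> 0} \<le> card {k}" by (intro card_mono) auto
  then show False using assms(2) by simp
qed

lemma col_card:
  assumes "k < N" "A k k \<noteq> 0"
  shows "col_norm0 N A k = card (offsupp N A k) + 1"
proof -
  have "{i. i < N \<and> A i k \<noteq> 0} = insert k (offsupp N A k)" using assms by (auto simp: offsupp_def)
  moreover have "k \<notin> offsupp N A k" by (simp add: offsupp_def)
  ultimately show ?thesis unfolding col_norm0_def by (simp add: fin_offsupp)
qed

lemma offcol_eq: "offcol_norm2_sq N A k = (\<Sum>l\<in>offsupp N A k. (A l k)\<^sup>2)"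
  unfolding offcol_norm2_sq_def
  by (rule sum.mono_neutral_right) (auto simp: offsupp_def)

lemma mu_spawn:
  assumes ne: "offsupp N A k \<noteq> {}" and s: "s \<in> {1, -1}"
  shows "mu (spawn_pmf N A k s) i = (if i \<in> offsupp N A k then real_of_int s * A i k else 0)"
proof -
  define S where "S = offsupp N A k"
  define c where "c = real (card S)"
  have cpos: "c > 0" using ne fin_offsupp[of N A k] unfolding c_def S_def by (simp add: card_gt_0_iff)
  have "mu (spawn_pmf N A k s) i = (\<Sum>l\<in>S. mu (one_pmf (c * \<bar>A l k\<bar>) l (rsgn (A l k * real_of_int s))) i) / c"
    unfolding mu_def S_def c_def by (rule E_spawn[OF ne])
  also have "\<dots> = (\<Sum>l\<in>S. if i = l then real_of_int (rsgn (A l k * real_of_int s)) * (c * \<bar>A l k\<bar>) else 0) / c"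
    by (simp only: mu_one)
  also have "\<dots> = (if i \<in> S then real_of_int s * A i k else 0)"
  proof (cases "i \<in> S")
    case True
    have "real_of_int (rsgn (A i k * real_of_int s)) * (c * \<bar>A i k\<bar>) / c = real_of_int (rsgn (A i k * real_of_int s)) * \<bar>A i k\<bar>"
      using cpos by simp
    then show ?thesis using True fin_offsupp[of N A k] rsgn_abs[OF s, of "A i k"] unfolding S_def by simp
  next
    case False then show ?thesis using fin_offsupp[of N A k] unfolding S_def by simp
  qed
  finally show ?thesis unfolding S_def .
qed

lemma mu_diag:
  assumes s: "s \<in> {1, -1}"
  shows "mu (diag_pmf A k s) i = (if i = k then real_of_int s * A k k else 0)"
  unfolding diag_eq mu_one using rsgn_abs[OF s, of "A k k"] by simp

lemma V_spawn:
  assumes ne: "offsupp N A k \<noteq> {}" and s: "s \<in> {1, -1}"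
  shows "V N (spawn_pmf N A k s) (mu (spawn_pmf N A k s))
     \<le> (real (card (offsupp N A k)) - 1) * (\<Sum>l\<in>offsupp N A k. (A l k)\<^sup>2) + 1/4"
proof -
  define S where "S = offsupp N A k"
  define c where "c = real (card S)"
  define W where "W = (\<Sum>l\<in>S. (A l k)\<^sup>2)"
  define \<mu> where "\<mu> = mu (spawn_pmf N A k s)"
  have finS: "finite S" unfolding S_def by (rule fin_offsupp)
  have cpos: "c > 0" using ne finS unfolding c_def S_def by (simp add: card_gt_0_iff)
  have SN: "S \<subseteq> {..<N}" unfolding S_def offsupp_def by auto
  have s2: "(real_of_int s)\<^sup>2 = 1" using s by auto
  have mu_eq: "\<mu> i = (if i \<in> S then real_of_int s * A i k else 0)" for i
    unfolding \<mu>_def S_def by (rule mu_spawn[OF ne s])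
  have musq: "(\<Sum>i<N. (\<mu> i)\<^sup>2) = W"
  proof -
    have "(\<Sum>i<N. (\<mu> i)\<^sup>2) = (\<Sum>i<N. if i \<in> S then (A i k)\<^sup>2 else 0)"
      by (rule sum.cong) (auto simp: mu_eq power_mult_distrib s2)
    also have "\<dots> = (\<Sum>i\<in>{..<N} \<inter> S. (A i k)\<^sup>2)" by (rule sum.inter_restrict[symmetric]) simp
    also have "{..<N} \<inter> S = S" using SN by auto
    finally show ?thesis unfolding W_def .
  qed
  have each: "V N (one_pmf (c * \<bar>A l k\<bar>) l (rsgn (A l k * real_of_int s))) \<mu>
      \<le> (c * c - 2 * c) * (A l k)\<^sup>2 + (1/4 + W)" if l: "l \<in> S" for l
  proof -
    have lN: "l < N" and Al: "A l k \<noteq> 0" using l unfolding S_def offsupp_def by auto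
    have "V N (one_pmf (c * \<bar>A l k\<bar>) l (rsgn (A l k * real_of_int s))) \<mu>
       \<le> ((c * \<bar>A l k\<bar>)\<^sup>2 + 1/4) - 2 * (real_of_int (rsgn (A l k * real_of_int s)) * \<mu> l) * (c * \<bar>A l k\<bar>) + (\<Sum>i<N. (\<mu> i)\<^sup>2)"
      by (rule V_one[OF lN rsgn_sq[OF Al s]])
    also have "real_of_int (rsgn (A l k * real_of_int s)) * \<mu> l = \<bar>A l k\<bar>"
      using l rsgn_mu[OF s, of "A l k"] by (simp add: mu_eq)
    finally show ?thesis unfolding musq by (simp add: power2_eq_square algebra_simps)
  qed
  have "V N (spawn_pmf N A k s) \<mu> = (\<Sum>l\<in>S. V N (one_pmf (c * \<bar>A l k\<bar>) l (rsgn (A l k * real_of_int s))) \<mu>) / c"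
    unfolding V_def S_def c_def by (rule E_spawn[OF ne])
  also have "\<dots> \<le> (\<Sum>l\<in>S. (c * c - 2 * c) * (A l k)\<^sup>2 + (1/4 + W)) / c"
    using cpos each by (intro divide_right_mono sum_mono) auto
  also have "(\<Sum>l\<in>S. (c * c - 2 * c) * (A l k)\<^sup>2 + (1/4 + W)) = (c * c - 2 * c) * W + c * (1/4 + W)"
    by (simp add: sum.distrib sum_distrib_left W_def c_def)
  also have "((c * c - 2 * c) * W + c * (1/4 + W)) / c = (c - 1) * W + 1/4"
    using cpos by (simp add: field_simps)
  finally show ?thesis unfolding \<mu>_def c_def W_def S_def .
qed

lemma V_diag:
  assumes kN: "k < N" and Ak: "A k k \<noteq> 0" and s: "s \<in> {1, -1}"
  shows "V N (diag_pmf A k s) (mu (diag_pmf A k s)) \<le> 1/4"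
proof -
  define \<mu> where "\<mu> = mu (diag_pmf A k s)"
  have s2: "(real_of_int s)\<^sup>2 = 1" using s by auto
  have mu_eq: "\<mu> i = (if i = k then real_of_int s * A k k else 0)" for i
    unfolding \<mu>_def by (rule mu_diag[OF s])
  have musq: "(\<Sum>i<N. (\<mu> i)\<^sup>2) = (A k k)\<^sup>2"
  proof -
    have "(\<Sum>i<N. (\<mu> i)\<^sup>2) = (\<Sum>i<N. if i = k then (A k k)\<^sup>2 else 0)"
      by (rule sum.cong) (auto simp: mu_eq power_mult_distrib s2)
    then show ?thesis using kN by simp
  qed
  have "V N (diag_pmf A k s) \<mu>
       \<le> ((\<bar>A k k\<bar>)\<^sup>2 + 1/4) - 2 * (real_of_int (rsgn (A k k * real_of_int s)) * \<mu> k) * \<bar>A k k\<bar> + (\<Sum>i<N. (\<mu> i)\<^sup>2)"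
    unfolding diag_eq by (rule V_one[OF kN rsgn_sq[OF Ak s]])
  also have "real_of_int (rsgn (A k k * real_of_int s)) * \<mu> k = \<bar>A k k\<bar>"
    using rsgn_mu[OF s, of "A k k"] by (simp add: mu_eq)
  also have "(\<Sum>i<N. (\<mu> i)\<^sup>2) = (A k k)\<^sup>2" by (rule musq)
  finally show ?thesis unfolding \<mu>_def by (simp add: power2_eq_square algebra_simps)
qed

lemma particle_facts:
  assumes kN: "k < N" and Ak: "A k k \<noteq> 0" and hc: "card {i. i < N \<and> A i k \<noteq> 0} \<ge> 2"
    and s: "s \<in> {1, -1}"
  shows "finite (set_pmf (particle_pmf N A (k, s)))"
    and "\<And>i. i < N \<Longrightarrow> mu (particle_pmf N A (k, s)) i = real_of_int s * A i k"
    and "V N (particle_pmf N A (k, s)) (mu (particle_pmf N A (k, s)))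
          \<le> (real (col_norm0 N A k) - 2) * offcol_norm2_sq N A k + 1/2"
proof -
  have ne: "offsupp N A k \<noteq> {}" by (rule offsupp_ne[of k N A, OF kN hc])
  have fS: "finite (set_pmf (spawn_pmf N A k s))" by (rule fin_spawn[OF ne])
  have fD: "finite (set_pmf (diag_pmf A k s))" by (rule fin_diag)
  show "finite (set_pmf (particle_pmf N A (k, s)))"
    unfolding particle_eq by (simp add: fin_addp fS fD)
  have muP: "mu (particle_pmf N A (k, s)) i = mu (spawn_pmf N A k s) i + mu (diag_pmf A k s) i" for i
    unfolding particle_eq by (simp add: mu_addp fS fD)
  show "mu (particle_pmf N A (k, s)) i = real_of_int s * A i k" if iN: "i < N" for i
    unfolding muP mu_spawn[OF ne s] mu_diag[OF s]
    using iN by (auto simp: offsupp_def)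
  have "V N (particle_pmf N A (k, s)) (mu (particle_pmf N A (k, s)))
      = V N (addp (spawn_pmf N A k s) (diag_pmf A k s)) (\<lambda>i. mu (spawn_pmf N A k s) i + mu (diag_pmf A k s) i)"
    unfolding particle_eq[of N A "(k, s)"] muP[unfolded particle_eq] by simp
  also have "\<dots> = V N (spawn_pmf N A k s) (mu (spawn_pmf N A k s)) + V N (diag_pmf A k s) (mu (diag_pmf A k s))"
    by (rule V_addp[OF fS fD])
  also have "\<dots> \<le> ((real (card (offsupp N A k)) - 1) * (\<Sum>l\<in>offsupp N A k. (A l k)\<^sup>2) + 1/4) + 1/4"
    by (intro add_mono V_spawn[OF ne s] V_diag[where k=k and N=N and A=A and s=s, OF kN Ak s])
  also have "\<dots> = (real (col_norm0 N A k) - 2) * offcol_norm2_sq N A k + 1/2"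
    unfolding col_card[where k=k and N=N and A=A, OF kN Ak] offcol_eq by simp
  finally show "V N (particle_pmf N A (k, s)) (mu (particle_pmf N A (k, s)))
          \<le> (real (col_norm0 N A k) - 2) * offcol_norm2_sq N A k + 1/2" .
qed

lemma list_facts:
  assumes "\<forall>p\<in>set ps. finite (set_pmf (particle_pmf N A p))"
  shows "finite (set_pmf (sum_particles N A ps)) \<and>
     mu (sum_particles N A ps) = (\<lambda>i. \<Sum>p\<leftarrow>ps. mu (particle_pmf N A p) i) \<and>
     V N (sum_particles N A ps) (\<lambda>i. \<Sum>p\<leftarrow>ps. mu (particle_pmf N A p) i)
       = (\<Sum>p\<leftarrow>ps. V N (particle_pmf N A p) (mu (particle_pmf N A p)))"
  using assms
proof (induction ps)
  case Nil
  show ?case by (simp add: mu_def V_def)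
next
  case (Cons p ps)
  have fP: "finite (set_pmf (particle_pmf N A p))" using Cons.prems by simp
  have IH: "finite (set_pmf (sum_particles N A ps))"
     "mu (sum_particles N A ps) = (\<lambda>i. \<Sum>p\<leftarrow>ps. mu (particle_pmf N A p) i)"
     "V N (sum_particles N A ps) (\<lambda>i. \<Sum>p\<leftarrow>ps. mu (particle_pmf N A p) i)
       = (\<Sum>p\<leftarrow>ps. V N (particle_pmf N A p) (mu (particle_pmf N A p)))"
    using Cons.IH Cons.prems by auto
  have eq: "sum_particles N A (p # ps) = addp (particle_pmf N A p) (sum_particles N A ps)"
    by (simp add: addp_def)
  have "V N (addp (particle_pmf N A p) (sum_particles N A ps))
          (\<lambda>i. mu (particle_pmf N A p) i + mu (sum_particles N A ps) i)
      = V N (particle_pmf N A p) (mu (particle_pmf N A p)) + V N (sum_particles N A ps) (mu (sum_particles N A ps))"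
    by (rule V_addp[OF fP IH(1)])
  then show ?case unfolding eq using fP IH
    by (simp add: fin_addp mu_addp)
qed

lemma sum_over_particles:
  fixes f :: "nat \<times> int \<Rightarrow> real"
  shows "(\<Sum>p\<leftarrow>particles N v. f p) = (\<Sum>k<N. real (nat \<bar>v k\<bar>) * f (k, sgn (v k)))"
  by (induction N) (simp_all add: particles_def sum_list_replicate)

lemma particles_mem: "p \<in> set (particles N v) \<Longrightarrow> fst p < N \<and> snd p = sgn (v (fst p)) \<and> v (fst p) \<noteq> 0"
  by (auto simp: particles_def split: if_splits)

theorem mainTheorem5:
  fixes N :: nat and A :: "nat \<Rightarrow> nat \<Rightarrow> real" and v :: "nat \<Rightarrow> int" and m :: real
  assumes "N \<ge> 1"
    and "\<forall>i<N. \<forall>j<N. A i j = A j i"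
    and "\<forall>k<N. A k k \<noteq> 0"
    and "\<forall>k<N. card {i. i < N \<and> A i k \<noteq> 0} \<ge> 2"
    and "m > 0"
    and "vec_norm1 N v \<ge> m"
  shows "measure_pmf.expectation (fciqmc_step N A v)
           (\<lambda>w. \<Sum>i<N. (real_of_int (w i) - mat_vec N A v i)\<^sup>2)
         \<le> C_e N A * (mat_norm1 N A)\<^sup>2 * (vec_norm1 N v)\<^sup>2 / m"
proof -
  note N1 = assms(1) and Adiag = assms(3) and hc = assms(4) and mpos = assms(5) and Mm = assms(6)
  define ps where "ps = particles N v"
  define M where "M = vec_norm1 N v"
  define n1 where "n1 = mat_norm1 N A"
  define X where "X = Max ((\<lambda>k. (real (col_norm0 N A k) - 2) * offcol_norm2_sq N A k) ` {..<N})"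
  have good: "fst p < N \<and> snd p \<in> {1, -1}" if "p \<in> set ps" for p
    using particles_mem[of p N v] that unfolding ps_def
    by (auto simp: sgn_if)
  have pf: "finite (set_pmf (particle_pmf N A p))"
     "\<And>i. i < N \<Longrightarrow> mu (particle_pmf N A p) i = real_of_int (snd p) * A i (fst p)"
     "V N (particle_pmf N A p) (mu (particle_pmf N A p))
          \<le> (real (col_norm0 N A (fst p)) - 2) * offcol_norm2_sq N A (fst p) + 1/2"
    if "p \<in> set ps" for p
  proof -
    have kN: "fst p < N" and s: "snd p \<in> {1, -1}" using good[OF that] by auto
    have pe: "p = (fst p, snd p)" by simp
    note F = particle_facts[of "fst p" N A "snd p", OF kN Adiag[rule_format, OF kN] hc[rule_format, OF kN] s]
    show "finite (set_pmf (particle_pmf N A p))" using F(1) pe by metis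
    show "\<And>i. i < N \<Longrightarrow> mu (particle_pmf N A p) i = real_of_int (snd p) * A i (fst p)"
      using F(2) pe by metis
    show "V N (particle_pmf N A p) (mu (particle_pmf N A p))
          \<le> (real (col_norm0 N A (fst p)) - 2) * offcol_norm2_sq N A (fst p) + 1/2"
      using F(3) pe by metis
  qed
  have LF: "finite (set_pmf (sum_particles N A ps)) \<and>
     mu (sum_particles N A ps) = (\<lambda>i. \<Sum>p\<leftarrow>ps. mu (particle_pmf N A p) i) \<and>
     V N (sum_particles N A ps) (\<lambda>i. \<Sum>p\<leftarrow>ps. mu (particle_pmf N A p) i)
       = (\<Sum>p\<leftarrow>ps. V N (particle_pmf N A p) (mu (particle_pmf N A p)))"
    by (rule list_facts) (use pf(1) in auto)
  have mv: "mat_vec N A v i = (\<Sum>p\<leftarrow>ps. mu (particle_pmf N A p) i)" if iN: "i < N" for i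
  proof -
    have "(\<Sum>p\<leftarrow>ps. mu (particle_pmf N A p) i) = (\<Sum>p\<leftarrow>ps. real_of_int (snd p) * A i (fst p))"
      by (rule arg_cong[where f=sum_list], rule map_cong[OF refl]) (use pf(2) iN in auto)
    also have "\<dots> = (\<Sum>k<N. real (nat \<bar>v k\<bar>) * (real_of_int (sgn (v k)) * A i k))"
      unfolding ps_def using sum_over_particles[of "\<lambda>p. real_of_int (snd p) * A i (fst p)" N v] by simp
    also have "\<dots> = mat_vec N A v i"
      unfolding mat_vec_def
    proof (rule sum.cong[OF refl])
      fix k
      have "real (nat \<bar>v k\<bar>) * real_of_int (sgn (v k)) = real_of_int (v k)"
        by (simp add: sgn_if)
      then show "real (nat \<bar>v k\<bar>) * (real_of_int (sgn (v k)) * A i k) = A i k * real_of_int (v k)"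
        by (metis mult.assoc mult.commute)
    qed
    finally show ?thesis ..
  qed
  have "measure_pmf.expectation (fciqmc_step N A v)
           (\<lambda>w. \<Sum>i<N. (real_of_int (w i) - mat_vec N A v i)\<^sup>2)
      = V N (sum_particles N A ps) (mat_vec N A v)"
    unfolding V_def fciqmc_step_def ps_def ..
  also have "\<dots> = V N (sum_particles N A ps) (\<lambda>i. \<Sum>p\<leftarrow>ps. mu (particle_pmf N A p) i)"
    by (rule V_cong) (rule mv)
  also have "\<dots> = (\<Sum>p\<leftarrow>ps. V N (particle_pmf N A p) (mu (particle_pmf N A p)))"
    using LF by blast
  also have "\<dots> \<le> (\<Sum>p\<leftarrow>ps. X + 1/2)"
  proof (rule sum_list_mono)
    fix p assume p: "p \<in> set ps"
    have "(real (col_norm0 N A (fst p)) - 2) * offcol_norm2_sq N A (fst p) \<le> X"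
      unfolding X_def using good[OF p] by (intro Max_ge) auto
    then show "V N (particle_pmf N A p) (mu (particle_pmf N A p)) \<le> X + 1/2"
      using pf(3)[OF p] by linarith
  qed
  also have "\<dots> = (\<Sum>k<N. real (nat \<bar>v k\<bar>) * (X + 1/2))"
    unfolding ps_def using sum_over_particles[of "\<lambda>p. X + 1/2" N v] by simp
  also have "\<dots> = M * (X + 1/2)"
    unfolding M_def vec_norm1_def sum_distrib_right by simp
  finally have L: "measure_pmf.expectation (fciqmc_step N A v)
           (\<lambda>w. \<Sum>i<N. (real_of_int (w i) - mat_vec N A v i)\<^sup>2) \<le> M * (X + 1/2)" .
  have N0: "0 < N" using N1 by simp
  have X0: "X \<ge> 0"
  proof -
    have c2: "real (col_norm0 N A 0) \<ge> 2" using hc N0 unfolding col_norm0_def by auto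
    have o0: "offcol_norm2_sq N A 0 \<ge> 0" unfolding offcol_norm2_sq_def by (rule sum_nonneg) simp
    have "(real (col_norm0 N A 0) - 2) * offcol_norm2_sq N A 0 \<le> X"
      unfolding X_def using N0 by (intro Max_ge) auto
    moreover have "(real (col_norm0 N A 0) - 2) * offcol_norm2_sq N A 0 \<ge> 0" using c2 o0 by simp
    ultimately show ?thesis by linarith
  qed
  have n1pos: "n1 > 0"
  proof -
    have "\<bar>A 0 0\<bar> \<le> (\<Sum>i<N. \<bar>A i 0\<bar>)" using N0 by (intro member_le_sum) auto
    also have "\<dots> \<le> n1" unfolding n1_def mat_norm1_def using N0 by (intro Max_ge) auto
    finally show ?thesis using Adiag N0 by auto
  qed
  have Ce: "C_e N A = (X + 1/2) / n1\<^sup>2" unfolding C_e_def X_def n1_def ..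
  have M0: "M \<ge> m" using Mm unfolding M_def .
  have h1: "M \<le> M * M / m" using mpos M0 by (simp add: field_simps mult_right_mono)
  have "M * (X + 1/2) \<le> (X + 1/2) * (M * M / m)"
    using mult_left_mono[OF h1, of "X + 1/2"] X0 by (simp add: mult.commute)
  also have "\<dots> = ((X + 1/2) / n1\<^sup>2 * n1\<^sup>2) * M\<^sup>2 / m"
    using n1pos by (simp add: power2_eq_square)
  also have "\<dots> = C_e N A * (mat_norm1 N A)\<^sup>2 * (vec_norm1 N v)\<^sup>2 / m"
    by (simp only: Ce n1_def M_def)
  finally show ?thesis using L by linarith
qed

end
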